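(* Let $\mathbf{T}\subset\mathbb{S}^3$ be a $\mathbb{Z}_2$-symmetric spherical tetrahedron with dihedral angles $A$, $B=E$, $C=F$, $D$ and edge lengths $l_A$, $l_B=l_E$, $l_C=l_F$, $l_D$. Put $\mathcal{A}_+=\cos\frac{A+D}{2}$, $\mathcal{A}_-=\cos\frac{D-A}{2}$, $\mathcal{B}=\cos B$, $\mathcal{C}=\cos C$, and $$\Delta=(\mathcal{A}_--\mathcal{A}_+-\mathcal{B}-\mathcal{C})(\mathcal{A}_--\mathcal{A}_++\mathcal{B}+\mathcal{C})(\mathcal{A}_-+\mathcal{A}_+-\mathcal{B}+\mathcal{C})(\mathcal{A}_-+\mathcal{A}_++\mathcal{B}-\mathcal{C}).$$ Then the dual parameter $v=\sqrt{c_{00}c_{22}/\det G}$ of $\mathbf{T}$ is a positive root of the quadratic equation $$v^2-\frac{4\,(\mathcal{A}_+\mathcal{A}_-+\mathcal{B}\mathcal{C})(\mathcal{A}_+\mathcal{B}+\mathcal{A}_-\mathcal{C})(\mathcal{A}_+\mathcal{C}+\mathcal{A}_-\mathcal{B})}{\Delta}=1.$$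
   Context: A spherical tetrahedron $\mathbf{T}\subset\mathbb{S}^3\subset\mathbb{R}^4$ is the intersection of $\mathbb{S}^3$ with the cone over four linearly independent unit vectors $\mathrm{p}_0,\dots,\mathrm{p}_3$. Edge lengths $l_{ij}\in[0,\pi]$: $\cos l_{ij}=\langle\mathrm{p}_i,\mathrm{p}_j\rangle$; dihedral angles $\alpha_{ij}\in[0,\pi]$: $\cos\alpha_{ij}=-\langle\mathrm{v}_i,\mathrm{v}_j\rangle$ with $\mathrm{v}_i$ the outer unit normal of the face opposite $\mathrm{p}_i$. Notation: $l_A=l_{01}$, $l_B=l_{02}$, $l_C=l_{03}$, $l_D=l_{23}$, $l_E=l_{13}$, $l_F=l_{12}$; $A,\dots,F$ are the dihedral angles along the edges of lengths $l_A,\dots,l_F$. The Gram matrix is $G=(\langle\mathrm{v}_i,\mathrm{v}_j\rangle)_{i,j=0}^3=\begin{pmatrix}1&-\cos D&-\cos E&-\cos F\\ -\cos D&1&-\cos C&-\cos B\\ -\cos E&-\cos C&1&-\cos A\\ -\cos F&-\cos B&-\cos A&1\end{pmatrix}$, and $c_{ij}$ denotes its $(i,j)$-cofactor $(-1)^{i+j}\det(\text{minor})$. $\mathbf{T}$ is $\mathbb{Z}_2$-symmetric if invariant under rotation through $\pi$ about the axis through the midpoints of the edges $\mathrm{p}_0\mathrm{p}_1$ and $\mathrm{p}_2\mathrm{p}_3$ (so $l_B=l_E$, $l_C=l_F$, $B=E$, $C=F$). *)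

theory Defs
  imports "HOL-Analysis.Analysis" "Jordan_Normal_Form.Determinant"
begin

definition spherical_tetrahedron :: "(nat \<Rightarrow> real^4) \<Rightarrow> bool" where
  "spherical_tetrahedron p \<longleftrightarrow>
     (\<forall>i<4. norm (p i) = 1) \<and> inj_on p {..<4} \<and> independent (p ` {..<4})"

definition tetra_set :: "(nat \<Rightarrow> real^4) \<Rightarrow> (real^4) set" where
  "tetra_set p = {x. norm x = 1 \<and>
     (\<exists>t::nat \<Rightarrow> real. (\<forall>i<4. t i \<ge> 0) \<and> x = (\<Sum>i<4. t i *\<^sub>R p i))}"

definition outer_normal :: "(nat \<Rightarrow> real^4) \<Rightarrow> nat \<Rightarrow> real^4 \<Rightarrow> bool" where
  "outer_normal p i w \<longleftrightarrow>
     norm w = 1 \<and> (\<forall>j<4. j \<noteq> i \<longrightarrow> inner w (p j) = 0) \<and> inner w (p i) < 0"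

definition dihedral :: "(nat \<Rightarrow> real^4) \<Rightarrow> nat \<Rightarrow> nat \<Rightarrow> real" where
  "dihedral v i j = arccos (- inner (v i) (v j))"

definition gram :: "(nat \<Rightarrow> real^4) \<Rightarrow> real Matrix.mat" where
  "gram v = Matrix.mat 4 4 (\<lambda>(i, j). inner (v i) (v j))"

text \<open>Z2-symmetry: invariance under the rotation through pi about the great circle through
  the midpoints of the edges p0p1 and p2p3, i.e. the linear map fixing
  W = span {p0+p1, p2+p3} pointwise and acting as -1 on the orthogonal complement of W.\<close>
definition Z2_symmetric :: "(nat \<Rightarrow> real^4) \<Rightarrow> bool" where
  "Z2_symmetric p \<longleftrightarrow>
     (\<exists>R :: real^4 \<Rightarrow> real^4. linear R \<and>
        (\<forall>x\<in>span {p 0 + p 1, p 2 + p 3}. R x = x) \<and>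
        (\<forall>x. (\<forall>w\<in>span {p 0 + p 1, p 2 + p 3}. inner x w = 0) \<longrightarrow> R x = - x) \<and>
        R ` tetra_set p = tetra_set p)"

end

theory Submission
  imports Defs
begin




lemma det_mat_Suc:
  "det (Matrix.mat (Suc n) (Suc n) f) = (\<Sum>j<Suc n. f (0,j) * ((-1)^j *
     det (Matrix.mat n n (\<lambda>(i',j'). f (Suc i', if j' < j then j' else Suc j')))))"
proof -
  have "det (Matrix.mat (Suc n) (Suc n) f) = (\<Sum>j<Suc n. Matrix.mat (Suc n) (Suc n) f $$ (0,j) * cofactor (Matrix.mat (Suc n) (Suc n) f) 0 j)"
    by (rule laplace_expansion_row) auto
  also have "\<dots> = (\<Sum>j<Suc n. f (0,j) * ((-1)^j *
     det (Matrix.mat n n (\<lambda>(i',j'). f (Suc i', if j' < j then j' else Suc j')))))"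
  proof (rule sum.cong[OF refl])
    fix j assume j: "j \<in> {..<Suc n}"
    have "mat_delete (Matrix.mat (Suc n) (Suc n) f) 0 j = Matrix.mat n n (\<lambda>(i',j'). f (Suc i', if j' < j then j' else Suc j'))"
      unfolding mat_delete_def by (rule eq_matI) (use j in auto)
    then show "Matrix.mat (Suc n) (Suc n) f $$ (0,j) * cofactor (Matrix.mat (Suc n) (Suc n) f) 0 j = f (0,j) * ((-1)^j *
     det (Matrix.mat n n (\<lambda>(i',j'). f (Suc i', if j' < j then j' else Suc j'))))"
      unfolding cofactor_def using j by simp
  qed
  finally show ?thesis .
qed

lemma det_mat_1: "det (Matrix.mat 1 1 f) = f (0,0)"
  by (subst det_single) auto

lemma det3: "det (Matrix.mat 3 3 f) = f (0,0)*f (1,1)*f (2,2) - f (0,0)*f (1,2)*f (2,1) - f (0,1)*f (1,0)*f (2,2) + f (0,1)*f (1,2)*f (2,0) + f (0,2)*f (1,0)*f (2,1) - f (0,2)*f (1,1)*f (2,0)"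
  by (simp add: numeral_eq_Suc det_mat_Suc det_mat_1 lessThan_Suc del: One_nat_def) (simp add: algebra_simps)

lemma det4: "det (Matrix.mat 4 4 f) = f (0,0)*f (1,1)*f (2,2)*f (3,3) - f (0,0)*f (1,1)*f (2,3)*f (3,2) - f (0,0)*f (1,2)*f (2,1)*f (3,3) + f (0,0)*f (1,2)*f (2,3)*f (3,1) + f (0,0)*f (1,3)*f (2,1)*f (3,2) - f (0,0)*f (1,3)*f (2,2)*f (3,1) - f (0,1)*f (1,0)*f (2,2)*f (3,3) + f (0,1)*f (1,0)*f (2,3)*f (3,2) + f (0,1)*f (1,2)*f (2,0)*f (3,3) - f (0,1)*f (1,2)*f (2,3)*f (3,0) - f (0,1)*f (1,3)*f (2,0)*f (3,2) + f (0,1)*f (1,3)*f (2,2)*f (3,0) + f (0,2)*f (1,0)*f (2,1)*f (3,3) - f (0,2)*f (1,0)*f (2,3)*f (3,1) - f (0,2)*f (1,1)*f (2,0)*f (3,3) + f (0,2)*f (1,1)*f (2,3)*f (3,0) + f (0,2)*f (1,3)*f (2,0)*f (3,1) - f (0,2)*f (1,3)*f (2,1)*f (3,0) - f (0,3)*f (1,0)*f (2,1)*f (3,2) + f (0,3)*f (1,0)*f (2,2)*f (3,1) + f (0,3)*f (1,1)*f (2,0)*f (3,2) - f (0,3)*f (1,1)*f (2,2)*f (3,0) - f (0,3)*f (1,2)*f (2,0)*f (3,1) + f (0,3)*f (1,2)*f (2,1)*f (3,0)"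
  by (simp add: numeral_eq_Suc det_mat_Suc det_mat_1 lessThan_Suc del: One_nat_def) (simp add: algebra_simps)

lemma indep_coords:
  fixes p :: "nat \<Rightarrow> real^4"
  assumes inj: "inj_on p {..<4}" and ind: "independent (p ` {..<4})"
    and s: "(\<Sum>j<4. a j *\<^sub>R p j) = 0" and k: "k < 4"
  shows "a k = 0"
proof (rule ccontr)
  assume nz: "a k \<noteq> 0"
  define u where "u = (\<lambda>x. a (inv_into {..<4} p x))"
  have "(\<Sum>x\<in>p ` {..<4}. u x *\<^sub>R x) = (\<Sum>j<4. u (p j) *\<^sub>R p j)"
    by (rule sum.reindex[OF inj, unfolded comp_def])
  also have "\<dots> = (\<Sum>j<4. a j *\<^sub>R p j)"
    by (rule sum.cong) (auto simp: u_def inv_into_f_f[OF inj])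
  finally have "(\<Sum>x\<in>p ` {..<4}. u x *\<^sub>R x) = 0" using s by simp
  moreover have "u (p k) \<noteq> 0" using nz k by (simp add: u_def inv_into_f_f[OF inj])
  ultimately have "dependent (p ` {..<4})"
    using k by (subst dependent_finite) auto
  with ind show False by simp
qed

lemma indep_coords_eq:
  fixes p :: "nat \<Rightarrow> real^4"
  assumes inj: "inj_on p {..<4}" and ind: "independent (p ` {..<4})"
    and s: "(\<Sum>j<4. a j *\<^sub>R p j) = (\<Sum>j<4. b j *\<^sub>R p j)" and k: "k < 4"
  shows "a k = b k"
proof -
  have "(\<Sum>j<4. (a j - b j) *\<^sub>R p j) = 0"
    using s by (simp add: scaleR_diff_left sum_subtractf)
  from indep_coords[OF inj ind this k] show ?thesis by simp
qed

lemma span_full: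
  fixes p :: "nat \<Rightarrow> real^4"
  assumes inj: "inj_on p {..<4}" and ind: "independent (p ` {..<4})"
  shows "span (p ` {..<4}) = UNIV"
proof -
  have c: "card (p ` {..<4}) = 4" using card_image[OF inj] by simp
  have "dim (UNIV :: (real^4) set) = 4" by simp
  then have "UNIV \<subseteq> span (p ` {..<4})"
    using card_eq_dim[of "p ` {..<4}" UNIV] c ind by auto
  then show ?thesis by auto
qed

lemma orth_all_zero:
  fixes p :: "nat \<Rightarrow> real^4"
  assumes inj: "inj_on p {..<4}" and ind: "independent (p ` {..<4})"
    and o: "\<And>j. j < 4 \<Longrightarrow> inner x (p j) = 0"
  shows "x = 0"
proof -
  have "x \<in> span (p ` {..<4})" using span_full[OF inj ind] by auto
  then have "Linear_Algebra.orthogonal x x"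
    by (rule orthogonal_to_span) (use o in \<open>auto simp: Linear_Algebra.orthogonal_def\<close>)
  then show ?thesis by (simp add: orthogonal_self)
qed

lemma normal_unique:
  fixes p :: "nat \<Rightarrow> real^4"
  assumes inj: "inj_on p {..<4}" and ind: "independent (p ` {..<4})"
    and i: "i < 4" and u: "outer_normal p i u" and w: "outer_normal p i w"
  shows "u = w"
proof -
  define x where "x = inner w (p i) *\<^sub>R u - inner u (p i) *\<^sub>R w"
  have "x = 0"
  proof (rule orth_all_zero[OF inj ind])
    fix j :: nat assume j: "j < 4"
    show "inner x (p j) = 0"
      using u w j by (cases "j = i") (auto simp: x_def outer_normal_def inner_diff_left)
  qed
  then have e: "inner w (p i) *\<^sub>R u = inner u (p i) *\<^sub>R w" by (simp add: x_def)
  then have "norm (inner w (p i) *\<^sub>R u) = norm (inner u (p i) *\<^sub>R w)" by simp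
  then have "\<bar>inner w (p i)\<bar> = \<bar>inner u (p i)\<bar>" using u w by (simp add: outer_normal_def)
  then have "inner w (p i) = inner u (p i)" using u w by (simp add: outer_normal_def)
  with e show ?thesis using u by (simp add: outer_normal_def)
qed


lemma span2_obtain:
  fixes s t y :: "real^4"
  assumes "y \<in> span {s, t}"
  obtains a b where "y = a *\<^sub>R s + b *\<^sub>R t"
proof -
  from assms obtain k where "y - k *\<^sub>R s \<in> span {t}" by (auto simp: span_breakdown_eq)
  then obtain m where "y - k *\<^sub>R s = m *\<^sub>R t" by (auto simp: span_singleton)
  then have "y = k *\<^sub>R s + m *\<^sub>R t" by (simp add: algebra_simps)
  then show ?thesis using that by blast
qed

lemma sum4: "(\<Sum>j<(4::nat). f j) = f 0 + f 1 + f 2 + (f 3 :: 'a :: comm_monoid_add)"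
  by (simp add: eval_nat_numeral add.assoc)

lemma tetra_coords:
  fixes p :: "nat \<Rightarrow> real^4"
  assumes "x \<in> tetra_set p"
  obtains t :: "nat \<Rightarrow> real" where "\<And>i. i < 4 \<Longrightarrow> t i \<ge> 0" "x = t 0 *\<^sub>R p 0 + t 1 *\<^sub>R p 1 + t 2 *\<^sub>R p 2 + t 3 *\<^sub>R p 3"
proof -
  from assms obtain t where t: "\<forall>i<4. 0 \<le> t i" "x = (\<Sum>i<4. t i *\<^sub>R p i)"
    unfolding tetra_set_def by blast
  show ?thesis using that[of t] t unfolding sum4 by auto
qed

lemma vertex_in_tetra:
  fixes p :: "nat \<Rightarrow> real^4"
  assumes "norm (p k) = 1" "k < 4"
  shows "p k \<in> tetra_set p"
  unfolding tetra_set_def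
proof (intro CollectI conjI exI[of _ "\<lambda>j. if j = k then 1 else 0"])
  show "norm (p k) = 1" by fact
  show "\<forall>i<4. 0 \<le> (if i = k then 1 else (0::real))" by auto
  show "p k = (\<Sum>i<4. (if i = k then 1 else 0) *\<^sub>R p i)"
  proof -
    have "(\<Sum>i<4. (if i = k then 1 else 0) *\<^sub>R p i) = (\<Sum>i<4. if i = k then p i else 0)"
      by (rule sum.cong) auto
    also have "\<dots> = p k" using assms(2) by simp
    finally show ?thesis by simp
  qed
qed


lemma tetra_coords':
  fixes p :: "nat \<Rightarrow> real^4"
  assumes "x \<in> tetra_set p"
  shows "\<exists>t :: nat \<Rightarrow> real. (\<forall>i<4. t i \<ge> 0) \<and> x = t 0 *\<^sub>R p 0 + t 1 *\<^sub>R p 1 + t 2 *\<^sub>R p 2 + t 3 *\<^sub>R p 3"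
proof -
  from assms obtain t where t: "\<forall>i<4. 0 \<le> t i" "x = (\<Sum>i<4. t i *\<^sub>R p i)"
    unfolding tetra_set_def by blast
  show ?thesis using t unfolding sum4 by blast
qed

lemma coords4:
  fixes p :: "nat \<Rightarrow> real^4"
  assumes inj: "inj_on p {..<4}" and ind: "independent (p ` {..<4})"
    and e: "a0 *\<^sub>R p 0 + a1 *\<^sub>R p 1 + a2 *\<^sub>R p 2 + a3 *\<^sub>R p 3 = b0 *\<^sub>R p 0 + b1 *\<^sub>R p 1 + b2 *\<^sub>R p 2 + b3 *\<^sub>R p 3"
  shows "a0 = b0 \<and> a1 = b1 \<and> a2 = b2 \<and> a3 = b3"
proof -
  let ?a = "\<lambda>j::nat. if j = 0 then a0 else if j = 1 then a1 else if j = 2 then a2 else a3"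
  let ?b = "\<lambda>j::nat. if j = 0 then b0 else if j = 1 then b1 else if j = 2 then b2 else b3"
  have "(\<Sum>j<4. ?a j *\<^sub>R p j) = (\<Sum>j<4. ?b j *\<^sub>R p j)" unfolding sum4 using e by simp
  note c = indep_coords_eq[OF inj ind this]
  show ?thesis using c[of 0] c[of 1] c[of 2] c[of 3] by simp
qed

lemma pair_solve:
  fixes P Q y z a b :: "real^4"
  assumes A: "P - Q = y - z" and B: "P + Q = a + b" and x: "a - b = y + z"
  shows "P = b + y \<and> Q = a - y"
proof -
  have z: "z = a - b - y" using x by (simp add: algebra_simps)
  have "P + P = (P - Q) + (P + Q)" by simp
  also have "\<dots> = (b + y) + (b + y)" unfolding A B z by (simp add: algebra_simps)
  finally have "2 *\<^sub>R P = 2 *\<^sub>R (b + y)" by (simp add: scaleR_2)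
  then have P: "P = b + y" by simp
  then have "Q = a - y" using B by (simp add: algebra_simps)
  with P show ?thesis by simp
qed

lemma sym_R:
  fixes p :: "nat \<Rightarrow> real^4"
  assumes tet: "spherical_tetrahedron p" and sym: "Z2_symmetric p"
  obtains R where "linear R" "\<And>x y. inner (R x) (R y) = inner x y"
    "R (p 0) = p 1" "R (p 1) = p 0" "R (p 2) = p 3" "R (p 3) = p 2"
proof -
  have n: "\<And>i. i < 4 \<Longrightarrow> norm (p i) = 1" and inj: "inj_on p {..<4}"
    and ind: "independent (p ` {..<4})" using tet by (auto simp: spherical_tetrahedron_def)
  define S where "S = {p 0 + p 1, p 2 + p 3}"
  obtain R where lin: "linear R" and fixW: "\<And>x. x \<in> span S \<Longrightarrow> R x = x"
    and neg: "\<And>x. (\<forall>w\<in>span S. inner x w = 0) \<Longrightarrow> R x = - x"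
    and img: "R ` tetra_set p = tetra_set p"
    using sym unfolding Z2_symmetric_def S_def by blast
  have decomp: "\<exists>y z. y \<in> span S \<and> (\<forall>w\<in>span S. inner z w = 0) \<and> x = y + z \<and> R x = y - z" for x
  proof -
    obtain y z where y: "y \<in> span S" and z: "\<And>w. w \<in> span S \<Longrightarrow> Linear_Algebra.orthogonal z w"
      and x: "x = y + z" using orthogonal_subspace_decomp_exists[of S x] by blast
    have z': "\<forall>w\<in>span S. inner z w = 0" using z by (simp add: Linear_Algebra.orthogonal_def)
    have "R x = R y + R z" using x lin by (simp add: linear_add)
    also have "\<dots> = y - z" using fixW[OF y] neg[OF z'] by simp
    finally show ?thesis using y z' x by blast
  qed
  have isom: "inner (R x) (R x') = inner x x'" for x x'
  proof -
    obtain y z where y: "y \<in> span S" and z: "\<forall>w\<in>span S. inner z w = 0" and x: "x = y + z" and Rx: "R x = y - z"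
      using decomp[of x] by blast
    obtain y' z' where y': "y' \<in> span S" and z': "\<forall>w\<in>span S. inner z' w = 0" and x': "x' = y' + z'" and Rx': "R x' = y' - z'"
      using decomp[of x'] by blast
    have "inner z y' = 0" "inner z' y = 0" using z z' y y' by auto
    then have e: "inner (y - z) (y' - z') = inner (y + z) (y' + z')"
      by (simp add: inner_diff_left inner_diff_right inner_add_left inner_add_right inner_commute)
    have "inner (R x) (R x') = inner (y - z) (y' - z')" by (simp only: Rx Rx')
    also have "\<dots> = inner (y + z) (y' + z')" by (rule e)
    also have "\<dots> = inner x x'" by (simp only: x x')
    finally show ?thesis .
  qed
  have inT: "R (p i) \<in> tetra_set p" if i: "i < 4" for i
  proof -
    have "p i \<in> tetra_set p" by (rule vertex_in_tetra[of p i, OF n[OF i] i])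
    then have "R (p i) \<in> R ` tetra_set p" by (rule imageI)
    then show ?thesis by (simp only: img)
  qed
  have s1: "R (p 0 + p 1) = p 0 + p 1" by (rule fixW) (simp add: S_def span_base)
  have s2: "R (p 2 + p 3) = p 2 + p 3" by (rule fixW) (simp add: S_def span_base)
  obtain y z where y: "y \<in> span S" and x: "p 0 - p 1 = y + z" and Rx: "R (p 0 - p 1) = y - z"
    using decomp[of "p 0 - p 1"] by blast
  obtain a b where ab: "y = a *\<^sub>R (p 0 + p 1) + b *\<^sub>R (p 2 + p 3)"
    using span2_obtain y unfolding S_def by blast
  have R0: "R (p 0) = p 1 + y" and R1: "R (p 1) = p 0 - y"
  proof -
    have "R (p 0) - R (p 1) = y - z" using Rx lin by (simp add: linear_diff)
    moreover have "R (p 0) + R (p 1) = p 0 + p 1" using s1 lin by (simp add: linear_add)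
    ultimately have "R (p 0) = p 1 + y \<and> R (p 1) = p 0 - y" by (rule pair_solve[OF _ _ x])
    then show "R (p 0) = p 1 + y" "R (p 1) = p 0 - y" by simp_all
  qed
  obtain t :: "nat \<Rightarrow> real" where t: "\<forall>i<4. t i \<ge> 0" and te: "R (p 0) = t 0 *\<^sub>R p 0 + t 1 *\<^sub>R p 1 + t 2 *\<^sub>R p 2 + t 3 *\<^sub>R p 3"
  proof -
    have h: "R (p 0) \<in> tetra_set p" by (rule inT) simp
    show ?thesis using tetra_coords'[OF h] that by blast
  qed
  obtain t' :: "nat \<Rightarrow> real" where t': "\<forall>i<4. t' i \<ge> 0" and te': "R (p 1) = t' 0 *\<^sub>R p 0 + t' 1 *\<^sub>R p 1 + t' 2 *\<^sub>R p 2 + t' 3 *\<^sub>R p 3"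
  proof -
    have h: "R (p 1) \<in> tetra_set p" by (rule inT) simp
    show ?thesis using tetra_coords'[OF h] that by blast
  qed
  have "a *\<^sub>R p 0 + (1 + a) *\<^sub>R p 1 + b *\<^sub>R p 2 + b *\<^sub>R p 3 = t 0 *\<^sub>R p 0 + t 1 *\<^sub>R p 1 + t 2 *\<^sub>R p 2 + t 3 *\<^sub>R p 3" (is "?lhs = _")
  proof -
    have "?lhs = p 1 + y" unfolding ab by (simp add: algebra_simps)
    also have "\<dots> = R (p 0)" using R0 by simp
    finally show ?thesis using te by simp
  qed
  from coords4[OF inj ind this] t[rule_format, of 0] t[rule_format, of 2] have "a \<ge> 0" "b \<ge> 0" by auto
  moreover have "(1 - a) *\<^sub>R p 0 + (- a) *\<^sub>R p 1 + (- b) *\<^sub>R p 2 + (- b) *\<^sub>R p 3 = t' 0 *\<^sub>R p 0 + t' 1 *\<^sub>R p 1 + t' 2 *\<^sub>R p 2 + t' 3 *\<^sub>R p 3" (is "?lhs = _")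
  proof -
    have "?lhs = p 0 - y" unfolding ab by (simp add: algebra_simps)
    also have "\<dots> = R (p 1)" using R1 by simp
    finally show ?thesis using te' by simp
  qed
  from coords4[OF inj ind this] t'[rule_format, of 1] t'[rule_format, of 2] have "a \<le> 0" "b \<le> 0" by auto
  ultimately have "y = 0" using ab by simp
  then have P0: "R (p 0) = p 1" "R (p 1) = p 0" using R0 R1 by auto
  obtain y2 z2 where y2: "y2 \<in> span S" and x2: "p 2 - p 3 = y2 + z2" and Rx2: "R (p 2 - p 3) = y2 - z2"
    using decomp[of "p 2 - p 3"] by blast
  obtain a2 b2 where ab2: "y2 = a2 *\<^sub>R (p 0 + p 1) + b2 *\<^sub>R (p 2 + p 3)"
    using span2_obtain y2 unfolding S_def by blast
  have R2: "R (p 2) = p 3 + y2" and R3: "R (p 3) = p 2 - y2"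
  proof -
    have "R (p 2) - R (p 3) = y2 - z2" using Rx2 lin by (simp add: linear_diff)
    moreover have "R (p 2) + R (p 3) = p 2 + p 3" using s2 lin by (simp add: linear_add)
    ultimately have "R (p 2) = p 3 + y2 \<and> R (p 3) = p 2 - y2" by (rule pair_solve[OF _ _ x2])
    then show "R (p 2) = p 3 + y2" "R (p 3) = p 2 - y2" by simp_all
  qed
  obtain u :: "nat \<Rightarrow> real" where u: "\<forall>i<4. u i \<ge> 0" and ue: "R (p 2) = u 0 *\<^sub>R p 0 + u 1 *\<^sub>R p 1 + u 2 *\<^sub>R p 2 + u 3 *\<^sub>R p 3"
  proof -
    have h: "R (p 2) \<in> tetra_set p" by (rule inT) simp
    show ?thesis using tetra_coords'[OF h] that by blast
  qed
  obtain u' :: "nat \<Rightarrow> real" where u': "\<forall>i<4. u' i \<ge> 0" and ue': "R (p 3) = u' 0 *\<^sub>R p 0 + u' 1 *\<^sub>R p 1 + u' 2 *\<^sub>R p 2 + u' 3 *\<^sub>R p 3"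
  proof -
    have h: "R (p 3) \<in> tetra_set p" by (rule inT) simp
    show ?thesis using tetra_coords'[OF h] that by blast
  qed
  have "a2 *\<^sub>R p 0 + a2 *\<^sub>R p 1 + b2 *\<^sub>R p 2 + (1 + b2) *\<^sub>R p 3 = u 0 *\<^sub>R p 0 + u 1 *\<^sub>R p 1 + u 2 *\<^sub>R p 2 + u 3 *\<^sub>R p 3" (is "?lhs = _")
  proof -
    have "?lhs = p 3 + y2" unfolding ab2 by (simp add: algebra_simps)
    also have "\<dots> = R (p 2)" using R2 by simp
    finally show ?thesis using ue by simp
  qed
  from coords4[OF inj ind this] u[rule_format, of 0] u[rule_format, of 2] have "a2 \<ge> 0" "b2 \<ge> 0" by auto
  moreover have "(- a2) *\<^sub>R p 0 + (- a2) *\<^sub>R p 1 + (1 - b2) *\<^sub>R p 2 + (- b2) *\<^sub>R p 3 = u' 0 *\<^sub>R p 0 + u' 1 *\<^sub>R p 1 + u' 2 *\<^sub>R p 2 + u' 3 *\<^sub>R p 3" (is "?lhs = _")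
  proof -
    have "?lhs = p 2 - y2" unfolding ab2 by (simp add: algebra_simps)
    also have "\<dots> = R (p 3)" using R3 by simp
    finally show ?thesis using ue' by simp
  qed
  from coords4[OF inj ind this] u'[rule_format, of 0] u'[rule_format, of 3] have "a2 \<le> 0" "b2 \<le> 0" by auto
  ultimately have "y2 = 0" using ab2 by simp
  then have P2: "R (p 2) = p 3" "R (p 3) = p 2" using R2 R3 by auto
  show ?thesis using that[OF lin isom P0 P2] .
qed


definition idx4 :: "nat \<Rightarrow> 4" where
  "idx4 k = (if k = 0 then 1 else if k = 1 then 2 else if k = 2 then 3 else 4)"

lemma inner4: "inner (x :: real^4) y = vec_nth x 1 * vec_nth y 1 + vec_nth x 2 * vec_nth y 2 + vec_nth x 3 * vec_nth y 3 + vec_nth x 4 * vec_nth y 4"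
  by (simp add: inner_vec_def sum_4)

lemma gram_pos:
  fixes w :: "nat \<Rightarrow> real^4"
  assumes ind: "\<And>x :: nat \<Rightarrow> real. x 0 *\<^sub>R w 0 + x 1 *\<^sub>R w 1 + x 2 *\<^sub>R w 2 + x 3 *\<^sub>R w 3 = 0 \<Longrightarrow> x 0 = 0 \<and> x 1 = 0 \<and> x 2 = 0 \<and> x 3 = 0"
  shows "det (gram w) > 0"
proof -
  define V where "V = Matrix.mat 4 4 (\<lambda>(i,k). vec_nth (w i) (idx4 k))"
  have V: "V \<in> carrier_mat 4 4" by (simp add: V_def)
  have VV: "gram w = V * V\<^sup>T"
  proof (rule eq_matI)
    fix i j assume i: "i < dim_row (V * V\<^sup>T)" and j: "j < dim_col (V * V\<^sup>T)"
    then have i4: "i < 4" and j4: "j < 4" using V by auto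
    have "(V * V\<^sup>T) $$ (i,j) = (\<Sum>k<4. vec_nth (w i) (idx4 k) * vec_nth (w j) (idx4 k))"
      using i4 j4 V by (simp add: V_def scalar_prod_def atLeast0LessThan)
    also have "\<dots> = inner (w i) (w j)"
      by (simp add: sum4 inner4 idx4_def)
    finally show "gram w $$ (i,j) = (V * V\<^sup>T) $$ (i,j)" using i4 j4 by (simp add: gram_def)
  qed (use V in \<open>auto simp: gram_def\<close>)
  have "det V \<noteq> 0"
  proof
    assume "det V = 0"
    then have "det (V\<^sup>T) = 0" using det_transpose[OF V] by simp
    then obtain x where x: "x \<in> carrier_vec 4" "x \<noteq> 0\<^sub>v 4" "V\<^sup>T *\<^sub>v x = 0\<^sub>v 4"
      using det_0_iff_vec_prod_zero[of "V\<^sup>T" 4] V by auto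
    have comp: "(\<Sum>i<4. vec_nth (w i) (idx4 k) * Matrix.vec_index x i) = 0" if k: "k < 4" for k
    proof -
      have "Matrix.vec_index (V\<^sup>T *\<^sub>v x) k = 0" using x(3) k by simp
      then show ?thesis using k x(1) V by (simp add: V_def scalar_prod_def atLeast0LessThan)
    qed
    define X where "X = (\<lambda>i. Matrix.vec_index x i)"
    have "X 0 *\<^sub>R w 0 + X 1 *\<^sub>R w 1 + X 2 *\<^sub>R w 2 + X 3 *\<^sub>R w 3 = 0"
    proof -
      have "\<And>k. k < 4 \<Longrightarrow> vec_nth (X 0 *\<^sub>R w 0 + X 1 *\<^sub>R w 1 + X 2 *\<^sub>R w 2 + X 3 *\<^sub>R w 3) (idx4 k) = 0"
        using comp by (simp add: sum4 X_def algebra_simps)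
      from this[of 0] this[of 1] this[of 2] this[of 3] show ?thesis
        unfolding Finite_Cartesian_Product.vec_eq_iff forall_4 by (simp add: idx4_def)
    qed
    from ind[OF this] have "\<And>i. i < 4 \<Longrightarrow> Matrix.vec_index x i = 0"
      by (auto simp: X_def less_Suc_eq numeral_eq_Suc)
    then have "x = 0\<^sub>v 4" using x(1) by (intro eq_vecI) auto
    with x(2) show False by simp
  qed
  moreover have "det (gram w) = det V * det V"
  proof -
    have VT: "V\<^sup>T \<in> carrier_mat 4 4" using V by simp
    show ?thesis unfolding VV using det_mult[OF V VT] det_transpose[OF V] by simp
  qed
  ultimately show ?thesis by (metis not_real_square_gt_zero)
qed


lemma less4_cases: "(j::nat) < 4 \<Longrightarrow> j = 0 \<or> j = 1 \<or> j = 2 \<or> j = 3" by auto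

lemma normals_sym:
  fixes p v :: "nat \<Rightarrow> real^4"
  assumes tet: "spherical_tetrahedron p"
    and normals: "\<And>i. i < 4 \<Longrightarrow> outer_normal p i (v i)"
    and sym: "Z2_symmetric p"
  shows "inner (v 1) (v 3) = inner (v 0) (v 2)" "inner (v 1) (v 2) = inner (v 0) (v 3)"
proof -
  have inj: "inj_on p {..<4}" and ind: "independent (p ` {..<4})"
    using tet by (auto simp: spherical_tetrahedron_def)
  obtain R where lin: "linear R" and isom: "\<And>x y. inner (R x) (R y) = inner x y"
    and P: "R (p 0) = p 1" "R (p 1) = p 0" "R (p 2) = p 3" "R (p 3) = p 2"
    using sym_R[OF tet sym] by blast
  have nR: "norm (R x) = norm x" for x by (simp add: norm_eq_sqrt_inner isom)
  have Q: "inner (R x) (p 0) = inner x (p 1)" "inner (R x) (p 1) = inner x (p 0)"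
    "inner (R x) (p 2) = inner x (p 3)" "inner (R x) (p 3) = inner x (p 2)" for x
    using isom[of x "p 1"] isom[of x "p 0"] isom[of x "p 3"] isom[of x "p 2"] P by simp_all
  have N: "norm (v i) = 1" "\<And>j. j < 4 \<Longrightarrow> j \<noteq> i \<Longrightarrow> inner (v i) (p j) = 0" "inner (v i) (p i) < 0"
    if "i < 4" for i using normals[OF that] by (auto simp: outer_normal_def)
  have "outer_normal p 1 (R (v 0))"
  proof -
    have "inner (R (v 0)) (p j) = 0" if "j < 4" "j \<noteq> 1" for j
      using less4_cases[OF that(1)] that(2)
      by (auto simp: Q Q[unfolded One_nat_def] intro!: N(2))
    moreover have "inner (R (v 0)) (p 1) < 0" unfolding Q using N(3)[of 0] by simp
    ultimately show ?thesis using N(1)[of 0] by (simp add: outer_normal_def nR)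
  qed
  then have V0: "R (v 0) = v 1" using normal_unique[OF inj ind _ _ normals[of 1]] by simp
  have "outer_normal p 3 (R (v 2))"
  proof -
    have "inner (R (v 2)) (p j) = 0" if "j < 4" "j \<noteq> 3" for j
      using less4_cases[OF that(1)] that(2)
      by (auto simp: Q Q[unfolded One_nat_def] intro!: N(2))
    moreover have "inner (R (v 2)) (p 3) < 0" unfolding Q using N(3)[of 2] by simp
    ultimately show ?thesis using N(1)[of 2] by (simp add: outer_normal_def nR)
  qed
  then have V2: "R (v 2) = v 3" using normal_unique[OF inj ind _ _ normals[of 3]] by simp
  have "outer_normal p 2 (R (v 3))"
  proof -
    have "inner (R (v 3)) (p j) = 0" if "j < 4" "j \<noteq> 2" for j
      using less4_cases[OF that(1)] that(2)
      by (auto simp: Q Q[unfolded One_nat_def] intro!: N(2))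
    moreover have "inner (R (v 3)) (p 2) < 0" unfolding Q using N(3)[of 3] by simp
    ultimately show ?thesis using N(1)[of 3] by (simp add: outer_normal_def nR)
  qed
  then have V3: "R (v 3) = v 2" using normal_unique[OF inj ind _ _ normals[of 2]] by simp
  show "inner (v 1) (v 3) = inner (v 0) (v 2)" using isom[of "v 0" "v 2"] V0 V2 by simp
  show "inner (v 1) (v 2) = inner (v 0) (v 3)" using isom[of "v 0" "v 3"] V0 V3 by simp
qed


lemma cof00_mat: "cofactor (Matrix.mat 4 4 f) 0 0 = det (Matrix.mat 3 3 (\<lambda>(i,j). f (Suc i, Suc j)))"
proof -
  have "mat_delete (Matrix.mat 4 4 f) 0 0 = Matrix.mat 3 3 (\<lambda>(i,j). f (Suc i, Suc j))"
    unfolding mat_delete_def by (rule eq_matI) auto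
  then show ?thesis by (simp add: cofactor_def)
qed

lemma cof22_mat: "cofactor (Matrix.mat 4 4 f) 2 2 =
   det (Matrix.mat 3 3 (\<lambda>(i,j). f (if i < 2 then i else Suc i, if j < 2 then j else Suc j)))"
proof -
  have "mat_delete (Matrix.mat 4 4 f) 2 2 = Matrix.mat 3 3 (\<lambda>(i,j). f (if i < 2 then i else Suc i, if j < 2 then j else Suc j))"
    unfolding mat_delete_def by (rule eq_matI) auto
  then show ?thesis by (simp add: cofactor_def)
qed

lemma final_alg:
  fixes Ap Am a b c d :: real
  assumes P: "Ap * Am = (a + d) / 2" and S: "Ap^2 + Am^2 = 1 + a * d"
  shows "(Am - Ap - b - c) * (Am - Ap + b + c) * (Am + Ap - b + c) * (Am + Ap + b - c)
           = ((1-a)*(1-d) - (b+c)^2) * ((1+a)*(1+d) - (b-c)^2)"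
    and "(Ap * Am + b * c) * (Ap * b + Am * c) * (Ap * c + Am * b)
           = ((a + d) / 2 + b * c) * ((a + d) / 2 * (b^2 + c^2) + b * c * (1 + a * d))"
proof -
  have 1: "(Am - Ap - b - c) * (Am - Ap + b + c) = (Ap^2 + Am^2) - 2 * (Ap * Am) - (b+c)^2"
    by (simp add: algebra_simps power2_eq_square)
  have 2: "(Am + Ap - b + c) * (Am + Ap + b - c) = (Ap^2 + Am^2) + 2 * (Ap * Am) - (b-c)^2"
    by (simp add: algebra_simps power2_eq_square)
  have "(Am - Ap - b - c) * (Am - Ap + b + c) * (Am + Ap - b + c) * (Am + Ap + b - c)
     = ((Am - Ap - b - c) * (Am - Ap + b + c)) * ((Am + Ap - b + c) * (Am + Ap + b - c))" by (simp add: mult.assoc)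
  also have "\<dots> = ((1-a)*(1-d) - (b+c)^2) * ((1+a)*(1+d) - (b-c)^2)"
    unfolding 1 2 P S by (simp add: field_simps power2_eq_square)
  finally show "(Am - Ap - b - c) * (Am - Ap + b + c) * (Am + Ap - b + c) * (Am + Ap + b - c)
           = ((1-a)*(1-d) - (b+c)^2) * ((1+a)*(1+d) - (b-c)^2)" .
  have 3: "(Ap * b + Am * c) * (Ap * c + Am * b) = (Ap * Am) * (b^2 + c^2) + b * c * (Ap^2 + Am^2)"
    by (simp add: algebra_simps power2_eq_square)
  show "(Ap * Am + b * c) * (Ap * b + Am * c) * (Ap * c + Am * b)
           = ((a + d) / 2 + b * c) * ((a + d) / 2 * (b^2 + c^2) + b * c * (1 + a * d))"
  proof -
    have "(Ap * Am + b * c) * (Ap * b + Am * c) * (Ap * c + Am * b) = (Ap * Am + b * c) * ((Ap * Am) * (b^2 + c^2) + b * c * (Ap^2 + Am^2))"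
      using 3 by (simp add: mult.assoc)
    then show ?thesis by (simp only: P S)
  qed
qed

lemma final_poly:
  fixes a b c d :: real
  shows "(1 - a^2 - b^2 - c^2 - 2*a*b*c) * (1 - b^2 - c^2 - d^2 - 2*b*c*d)
     = ((1-a)*(1-d) - (b+c)^2) * ((1+a)*(1+d) - (b-c)^2)
       + 4 * (((a + d) / 2 + b * c) * ((a + d) / 2 * (b^2 + c^2) + b * c * (1 + a * d)))"
  by (simp add: field_simps power2_eq_square)

theorem lemma3:
  fixes p v :: "nat \<Rightarrow> real^4"
  assumes tet: "spherical_tetrahedron p"
    and normals: "\<And>i. i < 4 \<Longrightarrow> outer_normal p i (v i)"
    and sym: "Z2_symmetric p"
  defines "A \<equiv> dihedral v 2 3" and "B \<equiv> dihedral v 1 3" and "C \<equiv> dihedral v 1 2"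
    and "D \<equiv> dihedral v 0 1"
  defines "Ap \<equiv> cos ((A + D) / 2)" and "Am \<equiv> cos ((D - A) / 2)"
    and "cB \<equiv> cos B" and "cC \<equiv> cos C"
  defines "\<Delta> \<equiv> (Am - Ap - cB - cC) * (Am - Ap + cB + cC) * (Am + Ap - cB + cC) * (Am + Ap + cB - cC)"
  defines "dual \<equiv> sqrt (cofactor (gram v) 0 0 * cofactor (gram v) 2 2 / det (gram v))"
  shows "dual > 0 \<and>
         dual\<^sup>2 - 4 * (Ap * Am + cB * cC) * (Ap * cB + Am * cC) * (Ap * cC + Am * cB) / \<Delta> = 1"
proof -
  have inj: "inj_on p {..<4}" and ind: "independent (p ` {..<4})"
    and np: "\<And>i. i < 4 \<Longrightarrow> norm (p i) = 1" using tet by (auto simp: spherical_tetrahedron_def)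
  have N: "norm (v i) = 1" "\<And>j. j < 4 \<Longrightarrow> j \<noteq> i \<Longrightarrow> inner (v i) (p j) = 0" "inner (v i) (p i) < 0"
    if "i < 4" for i using normals[OF that] by (auto simp: outer_normal_def)
  have s1: "inner (v 1) (v 3) = inner (v 0) (v 2)" and s2: "inner (v 1) (v 2) = inner (v 0) (v 3)"
    using normals_sym[OF tet normals sym] by auto
  have vv: "inner (v i) (v i) = 1" if "i < 4" for i
    using N(1)[OF that] by (simp add: power2_norm_eq_inner[symmetric])
  have pp: "inner (p i) (p i) = 1" if "i < 4" for i
    using np[OF that] by (simp add: power2_norm_eq_inner[symmetric])
  have bnd: "\<bar>inner (v i) (v j)\<bar> \<le> 1" if "i < 4" "j < 4" for i j
    using Cauchy_Schwarz_ineq2[of "v i" "v j"] N(1)[OF that(1)] N(1)[OF that(2)] by simp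
  define ga where "ga = - inner (v 2) (v 3)"
  define gb where "gb = - inner (v 1) (v 3)"
  define gc where "gc = - inner (v 1) (v 2)"
  define gd where "gd = - inner (v 0) (v 1)"
  have E: "inner (v 0) (v 0) = 1" "inner (v 1) (v 1) = 1" "inner (v 2) (v 2) = 1" "inner (v 3) (v 3) = 1"
    "inner (v 0) (v 1) = - gd" "inner (v 1) (v 0) = - gd"
    "inner (v 0) (v 2) = - gb" "inner (v 2) (v 0) = - gb"
    "inner (v 0) (v 3) = - gc" "inner (v 3) (v 0) = - gc"
    "inner (v 1) (v 2) = - gc" "inner (v 2) (v 1) = - gc"
    "inner (v 1) (v 3) = - gb" "inner (v 3) (v 1) = - gb"
    "inner (v 2) (v 3) = - ga" "inner (v 3) (v 2) = - ga"
    using vv[of 0] vv[of 1] vv[of 2] vv[of 3] s1 s2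
    by (simp_all add: ga_def gb_def gc_def gd_def inner_commute)
  have cosA: "cos A = ga" unfolding A_def dihedral_def
    using bnd[of 2 3] by (subst cos_arccos) (auto simp: ga_def)
  have cosB: "cB = gb" unfolding cB_def B_def dihedral_def
    using bnd[of 1 3] by (subst cos_arccos) (auto simp: gb_def)
  have cosC: "cC = gc" unfolding cC_def C_def dihedral_def
    using bnd[of 1 2] by (subst cos_arccos) (auto simp: gc_def)
  have cosD: "cos D = gd" unfolding D_def dihedral_def
    using bnd[of 0 1] by (subst cos_arccos) (auto simp: gd_def)
  have P: "Ap * Am = (ga + gd) / 2"
  proof -
    have "Ap * Am = (cos ((A + D) / 2 - (D - A) / 2) + cos ((A + D) / 2 + (D - A) / 2)) / 2"
      unfolding Ap_def Am_def by (rule cos_times_cos)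
    also have "(A + D) / 2 - (D - A) / 2 = A" by (simp add: field_simps)
    also have "(A + D) / 2 + (D - A) / 2 = D" by (simp add: field_simps)
    finally show ?thesis using cosA cosD by simp
  qed
  have S: "Ap^2 + Am^2 = 1 + ga * gd"
  proof -
    have h1: "2 * ((A + D) / 2) = A + D" and h2: "2 * ((D - A) / 2) = D - A" by simp_all
    have "cos (A + D) = 2 * Ap^2 - 1" unfolding Ap_def using cos_double_cos[of "(A + D) / 2"] unfolding h1 .
    moreover have "cos (D - A) = 2 * Am^2 - 1" unfolding Am_def using cos_double_cos[of "(D - A) / 2"] unfolding h2 .
    moreover have "cos (A + D) + cos (D - A) = 2 * cos A * cos D" by (simp add: cos_add cos_diff)
    ultimately show ?thesis using cosA cosD by simp
  qed
  have Delta: "\<Delta> = ((1-ga)*(1-gd) - (gb+gc)^2) * ((1+ga)*(1+gd) - (gb-gc)^2)"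
    unfolding \<Delta>_def cosB cosC using final_alg(1)[OF P S] .
  have X: "(Ap * Am + cB * cC) * (Ap * cB + Am * cC) * (Ap * cC + Am * cB)
      = ((ga + gd) / 2 + gb * gc) * ((ga + gd) / 2 * (gb^2 + gc^2) + gb * gc * (1 + ga * gd))"
    unfolding cosB cosC using final_alg(2)[OF P S] .
  have detG: "det (gram v) = ((1-ga)*(1-gd) - (gb+gc)^2) * ((1+ga)*(1+gd) - (gb-gc)^2)"
    unfolding gram_def det4 by (simp add: E E[unfolded One_nat_def] E[unfolded numeral_2_eq_2] E[unfolded numeral_2_eq_2 One_nat_def]) (simp add: algebra_simps power2_eq_square)
  have c00: "cofactor (gram v) 0 0 = 1 - ga^2 - gb^2 - gc^2 - 2*ga*gb*gc"
    unfolding gram_def cof00_mat det3 by (simp add: E E[unfolded One_nat_def] E[unfolded numeral_2_eq_2] E[unfolded numeral_2_eq_2 One_nat_def]) (simp add: algebra_simps power2_eq_square)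
  have c22: "cofactor (gram v) 2 2 = 1 - gb^2 - gc^2 - gd^2 - 2*gb*gc*gd"
    unfolding gram_def cof22_mat det3 by (simp add: E E[unfolded One_nat_def] E[unfolded numeral_2_eq_2] E[unfolded numeral_2_eq_2 One_nat_def]) (simp add: algebra_simps power2_eq_square)
  have O: "inner (v 0) (p 1) = 0" "inner (v 0) (p 2) = 0" "inner (v 0) (p 3) = 0" "inner (v 1) (p 0) = 0" "inner (v 1) (p 2) = 0" "inner (v 1) (p 3) = 0" "inner (v 2) (p 0) = 0" "inner (v 2) (p 1) = 0" "inner (v 2) (p 3) = 0" "inner (v 3) (p 0) = 0" "inner (v 3) (p 1) = 0" "inner (v 3) (p 2) = 0"
    using N(2)[of 0] N(2)[of 1] N(2)[of 2] N(2)[of 3] by simp_all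
  have O': "inner (p 1) (v 0) = 0" "inner (p 2) (v 0) = 0" "inner (p 3) (v 0) = 0" "inner (p 0) (v 1) = 0" "inner (p 2) (v 1) = 0" "inner (p 3) (v 1) = 0" "inner (p 0) (v 2) = 0" "inner (p 1) (v 2) = 0" "inner (p 3) (v 2) = 0" "inner (p 0) (v 3) = 0" "inner (p 1) (v 3) = 0" "inner (p 2) (v 3) = 0"
    using O by (simp_all add: inner_commute)
  note OO = O O[unfolded One_nat_def] O' O'[unfolded One_nat_def] O[unfolded numeral_2_eq_2] O'[unfolded numeral_2_eq_2] O[unfolded numeral_2_eq_2 One_nat_def] O'[unfolded numeral_2_eq_2 One_nat_def]
  have nz: "inner (v i) (p i) \<noteq> 0" if "i < 4" for i using N(3)[OF that] by simp
  have pp0: "inner (p 0) (p 0) = 1" and pp2: "inner (p 2) (p 2) = 1" using pp by simp_all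
  have L: "inner (x0 *\<^sub>R u0 + x1 *\<^sub>R u1 + x2 *\<^sub>R u2 + x3 *\<^sub>R u3) q
     = x0 * inner u0 q + x1 * inner u1 q + x2 * inner u2 q + x3 * inner u3 q" for x0 x1 x2 x3 and u0 u1 u2 u3 q :: "real^4"
    by (simp add: inner_add_left)
  have pos1: "det (gram v) > 0"
  proof (rule gram_pos)
    fix x :: "nat \<Rightarrow> real"
    assume h: "x 0 *\<^sub>R v 0 + x 1 *\<^sub>R v 1 + x 2 *\<^sub>R v 2 + x 3 *\<^sub>R v 3 = 0"
    have "x 0 * inner (v 0) (p k) + x 1 * inner (v 1) (p k) + x 2 * inner (v 2) (p k) + x 3 * inner (v 3) (p k) = 0" for k
      using L[of "x 0" "v 0" "x 1" "v 1" "x 2" "v 2" "x 3" "v 3" "p k"] h by simp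
    from this[of 0] this[of 1] this[of 2] this[of 3] nz[of 0] nz[of 1] nz[of 2] nz[of 3]
    show "x 0 = 0 \<and> x 1 = 0 \<and> x 2 = 0 \<and> x 3 = 0" by (simp add: OO)
  qed
  define w0 where "w0 = v(0 := p 0)"
  have pos2: "det (gram w0) > 0"
  proof (rule gram_pos)
    fix x :: "nat \<Rightarrow> real"
    assume h: "x 0 *\<^sub>R w0 0 + x 1 *\<^sub>R w0 1 + x 2 *\<^sub>R w0 2 + x 3 *\<^sub>R w0 3 = 0"
    have "x 0 * inner (p 0) (p k) + x 1 * inner (v 1) (p k) + x 2 * inner (v 2) (p k) + x 3 * inner (v 3) (p k) = 0" for k
      using L[of "x 0" "p 0" "x 1" "v 1" "x 2" "v 2" "x 3" "v 3" "p k"] h by (simp add: w0_def)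
    from this[of 0] this[of 1] this[of 2] this[of 3] nz[of 0] nz[of 1] nz[of 2] nz[of 3] pp0
    show "x 0 = 0 \<and> x 1 = 0 \<and> x 2 = 0 \<and> x 3 = 0" by (simp add: OO)
  qed
  define w2 where "w2 = v(2 := p 2)"
  have pos3: "det (gram w2) > 0"
  proof (rule gram_pos)
    fix x :: "nat \<Rightarrow> real"
    assume h: "x 0 *\<^sub>R w2 0 + x 1 *\<^sub>R w2 1 + x 2 *\<^sub>R w2 2 + x 3 *\<^sub>R w2 3 = 0"
    have "x 0 * inner (v 0) (p k) + x 1 * inner (v 1) (p k) + x 2 * inner (p 2) (p k) + x 3 * inner (v 3) (p k) = 0" for k
      using L[of "x 0" "v 0" "x 1" "v 1" "x 2" "p 2" "x 3" "v 3" "p k"] h by (simp add: w2_def)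
    from this[of 0] this[of 1] this[of 2] this[of 3] nz[of 0] nz[of 1] nz[of 2] nz[of 3] pp2
    show "x 0 = 0 \<and> x 1 = 0 \<and> x 2 = 0 \<and> x 3 = 0" by (simp add: OO)
  qed
  have dw0: "det (gram w0) = 1 - ga^2 - gb^2 - gc^2 - 2*ga*gb*gc"
    unfolding gram_def det4 w0_def by (simp add: E E[unfolded One_nat_def] E[unfolded numeral_2_eq_2] E[unfolded numeral_2_eq_2 One_nat_def] OO pp0) (simp add: algebra_simps power2_eq_square)
  have dw2: "det (gram w2) = 1 - gb^2 - gc^2 - gd^2 - 2*gb*gc*gd"
    unfolding gram_def det4 w2_def by (simp add: E E[unfolded One_nat_def] E[unfolded numeral_2_eq_2] E[unfolded numeral_2_eq_2 One_nat_def] OO pp2) (simp add: algebra_simps power2_eq_square)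
  have pos: "det (gram v) > 0" "cofactor (gram v) 0 0 > 0" "cofactor (gram v) 2 2 > 0"
    using pos1 pos2 pos3 dw0 dw2 c00 c22 by simp_all
  define r where "r = cofactor (gram v) 0 0 * cofactor (gram v) 2 2 / det (gram v)"
  have rpos: "r > 0" using pos by (simp add: r_def)
  have dual_r: "dual = sqrt r" by (simp add: dual_def r_def)
  have Dpos: "\<Delta> > 0" using pos(1) detG Delta by simp
  have key: "cofactor (gram v) 0 0 * cofactor (gram v) 2 2 = \<Delta> + 4 * ((Ap * Am + cB * cC) * (Ap * cB + Am * cC) * (Ap * cC + Am * cB))"
    unfolding c00 c22 Delta X by (rule final_poly)
  have "dual\<^sup>2 = r" using rpos by (simp add: dual_r)
  also have "r = (\<Delta> + 4 * ((Ap * Am + cB * cC) * (Ap * cB + Am * cC) * (Ap * cC + Am * cB))) / \<Delta>"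
    unfolding r_def key detG Delta[symmetric] ..
  finally have "dual\<^sup>2 - 4 * (Ap * Am + cB * cC) * (Ap * cB + Am * cC) * (Ap * cC + Am * cB) / \<Delta> = 1"
    using Dpos by (simp add: field_simps)
  moreover have "dual > 0" using rpos by (simp add: dual_r)
  ultimately show ?thesis by simp
qed

end
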